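(* Let $\lambda$ be a nonzero real number and $n$ a positive integer. Then, as polynomials in $x$, $$F_{n+1,\lambda}(x)=(x-n\lambda)F_{n,\lambda}(x)+(x+x^{2})F_{n,\lambda}'(x),$$ where $F_{n,\lambda}'(x)=\frac{d}{dx}F_{n,\lambda}(x)$.
   Context: For real $y$ and integer $k\ge0$: $(y)_{0,\lambda}=1$, $(y)_{k,\lambda}=y(y-\lambda)\cdots(y-(k-1)\lambda)$. The degenerate exponential is $e_\lambda(t)=\sum_{k\ge0}(1)_{k,\lambda}t^k/k!=(1+\lambda t)^{1/\lambda}$. The degenerate Fubini polynomials are defined by $\frac{1}{1-x(e_\lambda(t)-1)}=\sum_{n\ge0}F_{n,\lambda}(x)\frac{t^n}{n!}$. *)

theory Defs
  imports "HOL-Analysis.Analysis" "HOL-Computational_Algebra.Formal_Power_Series"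
begin

definition gen_fall :: "real \<Rightarrow> nat \<Rightarrow> real \<Rightarrow> real" where
  "gen_fall y k lam = (\<Prod>i<k. y - of_nat i * lam)"

definition deg_exp :: "real \<Rightarrow> real fps" where
  "deg_exp lam = Abs_fps (\<lambda>k. gen_fall 1 k lam / fact k)"

definition deg_fubini :: "nat \<Rightarrow> real \<Rightarrow> real \<Rightarrow> real" where
  "deg_fubini n lam x = fact n * fps_nth (inverse (1 - fps_const x * (deg_exp lam - 1))) n"

end

theory Submission
  imports Defs
begin

lemma gen_fall_Suc: "gen_fall y (Suc k) lam = gen_fall y k lam * (y - of_nat k * lam)"
  by (simp add: gen_fall_def)

lemma E0: "fps_nth (deg_exp lam - 1) 0 = 0"
  by (simp add: deg_exp_def gen_fall_def)

lemma deriv_D: "(1 + fps_const lam * fps_X) * fps_deriv (deg_exp lam) = deg_exp lam"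
proof (rule fps_ext)
  fix n
  have "fps_nth ((1 + fps_const lam * fps_X) * fps_deriv (deg_exp lam)) n
      = of_nat (n+1) * fps_nth (deg_exp lam) (n+1) + lam * (of_nat n * fps_nth (deg_exp lam) n)"
    by (cases n) (simp_all add: distrib_right mult.assoc)
  also have "\<dots> = fps_nth (deg_exp lam) n"
  proof -
    have f: "fact (n+1) = real (n+1) * fact n" by simp
    have F: "(fact n :: real) > 0" by simp
    have "real (n+1) * (gen_fall 1 n lam * (1 - real n * lam) / (real (n+1) * fact n))
       + lam * (real n * (gen_fall 1 n lam / fact n)) = gen_fall 1 n lam / fact n"
      using F by (simp add: field_simps del: of_nat_Suc)
    thus ?thesis
      unfolding deg_exp_def fps_nth_Abs_fps f Suc_eq_plus1[symmetric] gen_fall_Suc by simp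
  qed
  finally show "fps_nth ((1 + fps_const lam * fps_X) * fps_deriv (deg_exp lam)) n = fps_nth (deg_exp lam) n" .
qed

lemma Ek_zero:
  assumes "m < k" shows "fps_nth ((deg_exp lam - 1) ^ k) m = 0"
proof -
  let ?E = "deg_exp lam - 1"
  define s where "s = fps_shift 1 ?E"
  have "s * fps_X = ?E"
  proof (cases "?E = 0")
    case False
    have "subdegree ?E \<noteq> 0" using False E0[of lam] subdegree_eq_0_iff[of ?E] by blast
    hence "1 \<le> subdegree ?E" by simp
    thus ?thesis unfolding s_def by (rule fps_shift_times_fps_X)
  qed (simp add: s_def)
  hence "?E ^ k = fps_X ^ k * s ^ k" by (metis power_mult_distrib mult.commute)
  thus ?thesis using assms by (simp add: fps_X_power_mult_nth)
qed

lemma L3: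
  "of_nat (m+1) * fps_nth ((deg_exp lam - 1) ^ k) (m+1) + lam * of_nat m * fps_nth ((deg_exp lam - 1) ^ k) m
   = of_nat k * fps_nth ((deg_exp lam - 1) ^ k) m + of_nat k * fps_nth ((deg_exp lam - 1) ^ (k-1)) m"
proof -
  let ?E = "deg_exp lam - 1"
  have "(1 + fps_const lam * fps_X) * fps_deriv (?E ^ k)
        = fps_const (of_nat k) * ((1 + fps_const lam * fps_X) * fps_deriv (deg_exp lam)) * ?E ^ (k-1)"
    by (simp add: fps_deriv_power mult_ac)
  also have "\<dots> = fps_const (of_nat k) * (?E + 1) * ?E ^ (k-1)"
    by (simp add: deriv_D)
  also have "\<dots> = fps_const (of_nat k) * ?E ^ k + fps_const (of_nat k) * ?E ^ (k-1)"
  proof (cases k)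
    case (Suc j) thus ?thesis by (simp add: algebra_simps)
  qed simp
  finally have eq: "(1 + fps_const lam * fps_X) * fps_deriv (?E ^ k)
       = fps_const (of_nat k) * ?E ^ k + fps_const (of_nat k) * ?E ^ (k-1)" .
  have "fps_nth ((1 + fps_const lam * fps_X) * fps_deriv (?E ^ k)) m
     = of_nat (m+1) * fps_nth (?E ^ k) (m+1) + lam * of_nat m * fps_nth (?E ^ k) m"
    by (cases m) (simp_all add: distrib_right mult.assoc)
  with eq show ?thesis by simp
qed

lemma inv_nth:
  "fps_nth (inverse (1 - fps_const x * (deg_exp lam - 1))) m
   = (\<Sum>k\<le>m. x ^ k * fps_nth ((deg_exp lam - 1) ^ k) m)"
proof -
  let ?b = "fps_const x * (deg_exp lam - 1)"
  have b0: "fps_nth ?b 0 = 0" using E0[of lam] by simp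
  have c: "(1 - fps_X) oo ?b = 1 - ?b"
    unfolding fps_compose_sub_distrib fps_compose_1
    using E0[of lam] by (simp add: fps_X_fps_compose fps_eq_iff)
  have "inverse (1 - ?b) = inverse (1 - fps_X) oo ?b"
    using fps_inverse_compose[OF b0, of "1 - fps_X"] by (simp add: c)
  also have "inverse (1 - fps_X :: real fps) = Abs_fps (\<lambda>n. 1)"
  proof -
    have "inverse (inverse (Abs_fps (\<lambda>n. 1::real))) = Abs_fps (\<lambda>n. 1)"
      by (rule fps_inverse_idempotent) simp
    thus ?thesis by (simp only: fps_inverse_gp')
  qed
  finally have "fps_nth (inverse (1 - ?b)) m = fps_nth (Abs_fps (\<lambda>n. 1) oo ?b) m" by simp
  also have "\<dots> = (\<Sum>k\<le>m. fps_nth (?b ^ k) m)"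
    by (simp add: fps_compose_nth atLeast0AtMost)
  also have "\<dots> = (\<Sum>k\<le>m. x ^ k * fps_nth ((deg_exp lam - 1) ^ k) m)"
    by (simp add: power_mult_distrib fps_const_power)
  finally show ?thesis .
qed

theorem theorem14:
  fixes lam :: real and n :: nat
  assumes "lam \<noteq> 0" and "n \<ge> 1"
  shows "\<forall>x::real. deg_fubini (n + 1) lam x
           = (x - of_nat n * lam) * deg_fubini n lam x
             + (x + x^2) * deriv (\<lambda>y. deg_fubini n lam y) x"
proof
  fix x :: real
  define a where "a k m = fps_nth ((deg_exp lam - 1) ^ k) m" for k m
  have fub: "deg_fubini m lam y = fact m * (\<Sum>k\<le>m. y ^ k * a k m)" for m y
    by (simp add: deg_fubini_def inv_nth a_def)
  have "((\<lambda>y. deg_fubini n lam y) has_real_derivative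
          fact n * (\<Sum>k\<le>n. of_nat k * x ^ (k-1) * a k n)) (at x)"
    unfolding fub
    by (auto intro!: derivative_eq_intros sum.cong simp: sum_distrib_left)
  hence der: "deriv (\<lambda>y. deg_fubini n lam y) x = fact n * (\<Sum>k\<le>n. of_nat k * x ^ (k-1) * a k n)"
    by (rule DERIV_imp_deriv)
  have L: "of_nat (n+1) * a k (n+1) = (of_nat k - of_nat n * lam) * a k n + of_nat k * a (k-1) n" for k
    using L3[of n lam k] unfolding a_def by (simp add: algebra_simps)
  have "deg_fubini (n + 1) lam x = fact n * (\<Sum>k\<le>n+1. x ^ k * (of_nat (n+1) * a k (n+1)))"
  proof -
    have "deg_fubini (n + 1) lam x = fact n * (of_nat (n+1) * (\<Sum>k\<le>n+1. x ^ k * a k (n+1)))"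
      unfolding fub by (simp del: of_nat_Suc)
    also have "\<dots> = fact n * (\<Sum>k\<le>n+1. x ^ k * (of_nat (n+1) * a k (n+1)))"
      unfolding sum_distrib_left by (simp only: mult_ac)
    finally show ?thesis .
  qed
  also have "\<dots> = fact n * ((\<Sum>k\<le>n+1. (of_nat k - of_nat n * lam) * x ^ k * a k n)
      + (\<Sum>k\<le>n+1. of_nat k * x ^ k * a (k-1) n))"
  proof -
    have "(\<Sum>k\<le>n+1. x ^ k * (of_nat (n+1) * a k (n+1)))
       = (\<Sum>k\<le>n+1. (of_nat k - of_nat n * lam) * x ^ k * a k n + of_nat k * x ^ k * a (k-1) n)"
      by (intro sum.cong refl) (subst L, simp add: algebra_simps)
    thus ?thesis by (simp only: sum.distrib)
  qed
  also have "(\<Sum>k\<le>n+1. (of_nat k - of_nat n * lam) * x ^ k * a k n)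
       = (\<Sum>k\<le>n. (of_nat k - of_nat n * lam) * x ^ k * a k n)"
    using Ek_zero[of n "n+1" lam] by (simp add: a_def)
  also have "(\<Sum>k\<le>n+1. of_nat k * x ^ k * a (k-1) n)
       = (\<Sum>k\<le>n. of_nat (k+1) * x ^ (k+1) * a k n)"
    by (subst Suc_eq_plus1[symmetric], subst sum.atMost_Suc_shift) simp
  also have "fact n * ((\<Sum>k\<le>n. (of_nat k - of_nat n * lam) * x ^ k * a k n)
      + (\<Sum>k\<le>n. of_nat (k+1) * x ^ (k+1) * a k n))
    = fact n * (\<Sum>k\<le>n. (x - of_nat n * lam) * (x ^ k * a k n)
        + (x + x^2) * (of_nat k * x ^ (k-1) * a k n))"
  proof -
    have "(of_nat k - of_nat n * lam) * x ^ k * a k n + of_nat (k+1) * x ^ (k+1) * a k n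
        = (x - of_nat n * lam) * (x ^ k * a k n) + (x + x^2) * (of_nat k * x ^ (k-1) * a k n)" for k
    proof (cases k)
      case (Suc j) thus ?thesis by (simp add: algebra_simps power2_eq_square)
    qed (simp add: algebra_simps)
    thus ?thesis by (simp add: sum.distrib[symmetric])
  qed
  also have "\<dots> = (x - of_nat n * lam) * (fact n * (\<Sum>k\<le>n. x ^ k * a k n))
             + (x + x^2) * (fact n * (\<Sum>k\<le>n. of_nat k * x ^ (k-1) * a k n))"
    by (simp only: sum_distrib_left sum.distrib distrib_left mult_ac)
  also have "\<dots> = (x - of_nat n * lam) * deg_fubini n lam x
             + (x + x^2) * deriv (\<lambda>y. deg_fubini n lam y) x"
    unfolding der fub[of n x] by (rule refl)
  finally show "deg_fubini (n + 1) lam x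
           = (x - of_nat n * lam) * deg_fubini n lam x
             + (x + x^2) * deriv (\<lambda>y. deg_fubini n lam y) x" .
qed

end
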